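(* Let $n\geq 3$. If a probability distribution $p=(p(v))_{v\in\{0,1\}^n}\in\Delta_{2^n-1}$ lies in the RBM model $M^1_n$, then every flattening of the table $(p(v))_{v\in\{0,1\}^n}$ has rank at most $2$, and $$\sigma_{ij}\,\sigma_{ik}\,\sigma_{jk}\geq 0\qquad\text{for all distinct } i,j,k\in\{1,\dots,n\}.$$
   Context: The RBM model $M^1_n$ is the subset of the open simplex $\Delta_{2^n-1}$ consisting of all vectors $(p(v))_{v\in\{0,1\}^n}$ with $p(v)=\frac1Z\beta_1^{v_1}\cdots\beta_n^{v_n}(1+\gamma\,\omega_1^{v_1}\cdots\omega_n^{v_n})$, all parameters in $\mathbb{R}_{>0}$, $Z$ the normalizing constant. For a partition $\{1,\dots,n\}=A\cup B$ into two nonempty sets, the flattening of the $2\times\cdots\times2$ table $(p(v))$ is the $2^{|A|}\times 2^{|B|}$ matrix with rows indexed by $\{0,1\}^A$, columns by $\{0,1\}^B$, whose entry in row $v_A$, column $v_B$ is $p(v)$ for the $v$ with restrictions $v_A,v_B$. For $i\neq j$, $\sigma_{ij}$ is the covariance of the binary random variables $X_i,X_j$ (the $i$-th and $j$-th coordinates of a random vector with distribution $p$), i.e. the determinant of the $2\times2$ marginal table $\bigl(\mathrm{Prob}(X_i=a,X_j=b)\bigr)_{a,b\in\{0,1\}}$. *)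

theory Defs
  imports Complex_Main "Jordan_Normal_Form.DL_Rank"
begin

definition binvecs :: "nat \<Rightarrow> (nat \<Rightarrow> nat) set" where
  "binvecs n = {v. (\<forall>i\<in>{1..n}. v i \<in> {0,1}) \<and> (\<forall>i. i \<notin> {1..n} \<longrightarrow> v i = 0)}"

definition rbm_weight ::
  "nat \<Rightarrow> (nat \<Rightarrow> real) \<Rightarrow> real \<Rightarrow> (nat \<Rightarrow> real) \<Rightarrow> (nat \<Rightarrow> nat) \<Rightarrow> real" where
  "rbm_weight n \<beta> \<gamma> \<omega> v =
     (\<Prod>i\<in>{1..n}. \<beta> i ^ v i) * (1 + \<gamma> * (\<Prod>i\<in>{1..n}. \<omega> i ^ v i))"

definition in_RBM1 :: "nat \<Rightarrow> ((nat \<Rightarrow> nat) \<Rightarrow> real) \<Rightarrow> bool" where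
  "in_RBM1 n p \<longleftrightarrow>
     (\<exists>\<beta> \<gamma> \<omega>. (\<forall>i\<in>{1..n}. \<beta> i > 0 \<and> \<omega> i > 0) \<and> \<gamma> > 0 \<and>
        (\<forall>v\<in>binvecs n. p v = rbm_weight n \<beta> \<gamma> \<omega> v /
                             (\<Sum>w\<in>binvecs n. rbm_weight n \<beta> \<gamma> \<omega> w)))"

text \<open>Decoding of a natural number r < 2^|S| as a 0/1 assignment on S:
  the k-th smallest element of S gets bit k of r.\<close>
definition decode_bits :: "nat set \<Rightarrow> nat \<Rightarrow> nat \<Rightarrow> nat" where
  "decode_bits S r i = (r div 2 ^ card {a\<in>S. a < i}) mod 2"

text \<open>Flattening of the table p along A | B (B = complement of A in {1..n}):
  rows indexed by {0,1}^A, columns by {0,1}^B (via the bijection decode_bits).\<close>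
definition flattening :: "nat \<Rightarrow> ((nat \<Rightarrow> nat) \<Rightarrow> real) \<Rightarrow> nat set \<Rightarrow> real mat" where
  "flattening n p A =
     (let B = {1..n} - A in
      mat (2 ^ card A) (2 ^ card B)
        (\<lambda>(r, c). p (\<lambda>i. if i \<in> A then decode_bits A r i
                         else if i \<in> B then decode_bits B c i else 0)))"

definition mat_rank :: "real mat \<Rightarrow> nat" where
  "mat_rank M = vec_space.rank (dim_row M) M"

definition marg2 :: "nat \<Rightarrow> ((nat \<Rightarrow> nat) \<Rightarrow> real) \<Rightarrow> nat \<Rightarrow> nat \<Rightarrow> nat \<Rightarrow> nat \<Rightarrow> real" where
  "marg2 n p i j a b = (\<Sum>v\<in>{v\<in>binvecs n. v i = a \<and> v j = b}. p v)"

definition sigma :: "nat \<Rightarrow> ((nat \<Rightarrow> nat) \<Rightarrow> real) \<Rightarrow> nat \<Rightarrow> nat \<Rightarrow> real" where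
  "sigma n p i j = marg2 n p i j 0 0 * marg2 n p i j 1 1 - marg2 n p i j 0 1 * marg2 n p i j 1 0"

end

theory Submission
  imports Defs
begin

lemma binvecs_0: "binvecs 0 = {\<lambda>_. 0}"
  unfolding binvecs_def by auto

lemma binvecs_Suc: "binvecs (Suc n) = (\<lambda>(v,x). v(Suc n := x)) ` (binvecs n \<times> {0,1})"
proof (rule equalityI; rule subsetI)
  fix w assume w: "w \<in> binvecs (Suc n)"
  have "w(Suc n := 0) \<in> binvecs n" using w unfolding binvecs_def by auto
  moreover have "w (Suc n) \<in> {0,1}" using w unfolding binvecs_def by auto
  moreover have "w = (w(Suc n := 0))(Suc n := w (Suc n))" by simp
  ultimately show "w \<in> (\<lambda>(v,x). v(Suc n := x)) ` (binvecs n \<times> {0,1})"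
    by (metis (no_types, lifting) SigmaI case_prod_conv image_eqI)
next
  fix w assume "w \<in> (\<lambda>(v,x). v(Suc n := x)) ` (binvecs n \<times> {0,1})"
  then obtain v x where "v \<in> binvecs n" "x \<in> {0,1}" "w = v(Suc n := x)" by auto
  then show "w \<in> binvecs (Suc n)" unfolding binvecs_def by auto
qed

lemma binvecs_inj: "inj_on (\<lambda>(v,x). v(Suc n := x)) (binvecs n \<times> {0,1})"
proof (rule inj_onI, clarsimp)
  fix v x v' x'
  assume "v \<in> binvecs n" "v' \<in> binvecs n" "v(Suc n := x) = v'(Suc n := x')"
  moreover have "v (Suc n) = 0" "v' (Suc n) = 0" using calculation unfolding binvecs_def by auto
  ultimately show "v = v' \<and> x = x'"
    by (metis fun_upd_idem fun_upd_same fun_upd_upd)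
qed

lemma binvecs_finite: "finite (binvecs n)"
  by (induction n) (auto simp: binvecs_0 binvecs_Suc)

lemma sum_binvecs_prod:
  "(\<Sum>v\<in>binvecs n. \<Prod>l\<in>{1..n}. g l (v l)) = (\<Prod>l\<in>{1..n}. g l 0 + g l 1 :: real)"
proof (induction n)
  case 0
  then show ?case by (simp add: binvecs_0)
next
  case (Suc n)
  have ins: "{1..Suc n} = insert (Suc n) {1..n}" by auto
  have "(\<Sum>v\<in>binvecs (Suc n). \<Prod>l\<in>{1..Suc n}. g l (v l))
      = (\<Sum>(v,x)\<in>binvecs n \<times> {0,1}. \<Prod>l\<in>{1..Suc n}. g l ((v(Suc n := x)) l))"
    unfolding binvecs_Suc by (subst sum.reindex[OF binvecs_inj]) (simp add: case_prod_beta')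
  also have "\<dots> = (\<Sum>(v,x)\<in>binvecs n \<times> {0,1}. g (Suc n) x * (\<Prod>l\<in>{1..n}. g l (v l)))"
  proof (rule sum.cong, simp, clarify)
    fix v x
    have "(\<Prod>l\<in>{1..n}. g l ((v(Suc n := x)) l)) = (\<Prod>l\<in>{1..n}. g l (v l))"
      by (rule prod.cong) auto
    then show "(\<Prod>l\<in>{1..Suc n}. g l ((v(Suc n := x)) l)) = g (Suc n) x * (\<Prod>l\<in>{1..n}. g l (v l))"
      unfolding ins by simp
  qed
  also have "\<dots> = (\<Sum>v\<in>binvecs n. \<Sum>x\<in>{0,1}. g (Suc n) x * (\<Prod>l\<in>{1..n}. g l (v l)))"
    by (subst sum.cartesian_product) simp
  also have "\<dots> = (g (Suc n) 0 + g (Suc n) 1) * (\<Sum>v\<in>binvecs n. \<Prod>l\<in>{1..n}. g l (v l))"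
    by (simp add: sum_distrib_left algebra_simps sum.distrib)
  also have "\<dots> = (\<Prod>l\<in>{1..Suc n}. g l 0 + g l 1)"
    unfolding Suc ins by simp
  finally show ?case .
qed

lemma sum_binvecs_constr:
  assumes ij: "i \<in> {1..n}" "j \<in> {1..n}" "i \<noteq> j" and ab: "a \<in> {0,1}" "b \<in> {0,1}"
  shows "(\<Sum>v\<in>{v\<in>binvecs n. v i = a \<and> v j = b}. \<Prod>l\<in>{1..n}. f l (v l))
       = f i a * f j b * (\<Prod>l\<in>{1..n}-{i,j}. f l 0 + f l 1 :: real)"
proof -
  define g where "g l x = (if (l = i \<and> x \<noteq> a) \<or> (l = j \<and> x \<noteq> b) then 0 else f l x)" for l x
  have "(\<Sum>v\<in>{v\<in>binvecs n. v i = a \<and> v j = b}. \<Prod>l\<in>{1..n}. f l (v l))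
      = (\<Sum>v\<in>binvecs n. if v i = a \<and> v j = b then \<Prod>l\<in>{1..n}. f l (v l) else 0)"
    by (rule sum.inter_filter[OF binvecs_finite])
  also have "\<dots> = (\<Sum>v\<in>binvecs n. \<Prod>l\<in>{1..n}. g l (v l))"
  proof (rule sum.cong, simp)
    fix v assume v: "v \<in> binvecs n"
    show "(if v i = a \<and> v j = b then \<Prod>l\<in>{1..n}. f l (v l) else 0) = (\<Prod>l\<in>{1..n}. g l (v l))"
    proof (cases "v i = a \<and> v j = b")
      case True
      then show ?thesis by (auto intro!: prod.cong simp: g_def)
    next
      case False
      then have "\<exists>l\<in>{1..n}. g l (v l) = 0" using ij by (auto simp: g_def)
      then have "(\<Prod>l\<in>{1..n}. g l (v l)) = 0" by (simp add: prod_zero_iff)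
      moreover have "(if v i = a \<and> v j = b then \<Prod>l\<in>{1..n}. f l (v l) else 0) = 0"
        using False by (simp only: if_False)
      ultimately show ?thesis by simp
    qed
  qed
  also have "\<dots> = (\<Prod>l\<in>{1..n}. g l 0 + g l 1)" by (rule sum_binvecs_prod)
  also have "\<dots> = (g i 0 + g i 1) * (\<Prod>l\<in>{1..n}-{i}. g l 0 + g l 1)"
    using ij by (simp add: prod.remove)
  also have "(\<Prod>l\<in>{1..n}-{i}. g l 0 + g l 1) = (g j 0 + g j 1) * (\<Prod>l\<in>{1..n}-{i}-{j}. g l 0 + g l 1)"
    using ij by (intro prod.remove) auto
  also have "(\<Prod>l\<in>{1..n}-{i}-{j}. g l 0 + g l 1) = (\<Prod>l\<in>{1..n}-{i,j}. f l 0 + f l 1)"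
    by (rule prod.cong) (auto simp: g_def)
  also have "g i 0 + g i 1 = f i a" using ab ij by (auto simp: g_def)
  also have "g j 0 + g j 1 = f j b" using ab ij by (auto simp: g_def)
  finally show ?thesis by simp
qed

lemma rbm_weight_split:
  "rbm_weight n \<beta> \<gamma> \<omega> v = (\<Prod>l\<in>{1..n}. \<beta> l ^ v l) + \<gamma> * (\<Prod>l\<in>{1..n}. (\<beta> l * \<omega> l) ^ v l)"
  unfolding rbm_weight_def by (simp add: power_mult_distrib prod.distrib algebra_simps)

lemma sigma_formula:
  fixes \<beta> \<omega> :: "nat \<Rightarrow> real" and \<gamma> :: real
  assumes pos: "\<forall>i\<in>{1..n}. \<beta> i > 0 \<and> \<omega> i > 0" "\<gamma> > 0"
    and p: "\<forall>v\<in>binvecs n. p v = rbm_weight n \<beta> \<gamma> \<omega> v / (\<Sum>w\<in>binvecs n. rbm_weight n \<beta> \<gamma> \<omega> w)"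
    and ij: "i \<in> {1..n}" "j \<in> {1..n}" "i \<noteq> j"
  shows "\<exists>K>0. sigma n p i j = K * (\<omega> i - 1) * (\<omega> j - 1)"
proof -
  define P1 where "P1 v = (\<Prod>l\<in>{1..n}. \<beta> l ^ v l)" for v :: "nat \<Rightarrow> nat"
  define P2 where "P2 v = (\<Prod>l\<in>{1..n}. (\<beta> l * \<omega> l) ^ v l)" for v :: "nat \<Rightarrow> nat"
  define C1 where "C1 = (\<Prod>l\<in>{1..n}-{i,j}. 1 + \<beta> l)"
  define C2 where "C2 = (\<Prod>l\<in>{1..n}-{i,j}. 1 + \<beta> l * \<omega> l)"
  define Z where "Z = (\<Sum>w\<in>binvecs n. rbm_weight n \<beta> \<gamma> \<omega> w)"
  have rw: "rbm_weight n \<beta> \<gamma> \<omega> v = P1 v + \<gamma> * P2 v" for v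
    unfolding P1_def P2_def by (rule rbm_weight_split)
  have "Z = (\<Sum>w\<in>binvecs n. P1 w) + \<gamma> * (\<Sum>w\<in>binvecs n. P2 w)"
    unfolding Z_def rw by (simp add: sum.distrib sum_distrib_left)
  also have "\<dots> = (\<Prod>l\<in>{1..n}. 1 + \<beta> l) + \<gamma> * (\<Prod>l\<in>{1..n}. 1 + \<beta> l * \<omega> l)"
    unfolding P1_def P2_def using sum_binvecs_prod[where n=n and g="\<lambda>l x. \<beta> l ^ x"]
      sum_binvecs_prod[where n=n and g="\<lambda>l x. (\<beta> l * \<omega> l) ^ x"] by (simp add: add.commute)
  finally have Zeq: "Z = \<dots>" .
  have "Z > 0" unfolding Zeq using pos
    by (intro add_pos_pos mult_pos_pos prod_pos) (auto simp: add_pos_pos)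
  have C1pos: "C1 > 0" unfolding C1_def using pos by (intro prod_pos) (auto simp: add_pos_pos)
  have C2pos: "C2 > 0" unfolding C2_def using pos by (intro prod_pos) (auto simp: add_pos_pos)
  have bi: "\<beta> i > 0" "\<beta> j > 0" using pos ij by auto
  have marg: "marg2 n p i j a b = (\<beta> i ^ a * \<beta> j ^ b * C1 + \<gamma> * ((\<beta> i * \<omega> i) ^ a * (\<beta> j * \<omega> j) ^ b * C2)) / Z"
    if ab: "a \<in> {0,1}" "b \<in> {0,1}" for a b
  proof -
    let ?S = "{v\<in>binvecs n. v i = a \<and> v j = b}"
    have "marg2 n p i j a b = (\<Sum>v\<in>?S. (P1 v + \<gamma> * P2 v) / Z)"
      unfolding marg2_def using p by (intro sum.cong) (auto simp: Z_def rw)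
    also have "\<dots> = ((\<Sum>v\<in>?S. P1 v) + \<gamma> * (\<Sum>v\<in>?S. P2 v)) / Z"
      by (simp add: sum_divide_distrib[symmetric] sum.distrib sum_distrib_left)
    also have "(\<Sum>v\<in>?S. P1 v) = \<beta> i ^ a * \<beta> j ^ b * C1"
      unfolding P1_def C1_def using sum_binvecs_constr[OF ij ab, where f="\<lambda>l x. \<beta> l ^ x"] by (simp add: add.commute)
    also have "(\<Sum>v\<in>?S. P2 v) = (\<beta> i * \<omega> i) ^ a * (\<beta> j * \<omega> j) ^ b * C2"
      unfolding P2_def C2_def using sum_binvecs_constr[OF ij ab, where f="\<lambda>l x. (\<beta> l * \<omega> l) ^ x"] by (simp add: add.commute)
    finally show ?thesis .
  qed
  define K where "K = \<gamma> * C1 * C2 * \<beta> i * \<beta> j / Z^2"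
  have "K > 0" unfolding K_def using \<open>Z > 0\<close> C1pos C2pos bi pos by simp
  moreover have "sigma n p i j = K * (\<omega> i - 1) * (\<omega> j - 1)"
  proof -
    have m00: "marg2 n p i j 0 0 = (C1 + \<gamma> * C2) / Z" using marg[of 0 0] by simp
    have m01: "marg2 n p i j 0 1 = (\<beta> j * C1 + \<gamma> * (\<beta> j * \<omega> j * C2)) / Z" using marg[of 0 1] by simp
    have m10: "marg2 n p i j 1 0 = (\<beta> i * C1 + \<gamma> * (\<beta> i * \<omega> i * C2)) / Z" using marg[of 1 0] by simp
    have m11: "marg2 n p i j 1 1 = (\<beta> i * \<beta> j * C1 + \<gamma> * (\<beta> i * \<omega> i * (\<beta> j * \<omega> j) * C2)) / Z" using marg[of 1 1] by simp
    show ?thesis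
    unfolding sigma_def K_def m00 m01 m10 m11
    using \<open>Z > 0\<close> by (simp add: field_simps power2_eq_square)
  qed
  ultimately show ?thesis by blast
qed

lemma rank_le_2:
  fixes M :: "real mat"
  assumes "M \<in> carrier_mat R C"
    and "\<And>r c. r < R \<Longrightarrow> c < C \<Longrightarrow> M $$ (r,c) = u0 r * w0 c + u1 r * w1 c"
  shows "mat_rank M \<le> 2"
proof -
  define M1 where "M1 = mat R C (\<lambda>(r,c). u0 r * w0 c)"
  define M2 where "M2 = mat R C (\<lambda>(r,c). u1 r * w1 c)"
  have M1c: "M1 \<in> carrier_mat R C" and M2c: "M2 \<in> carrier_mat R C" unfolding M1_def M2_def by auto
  have "M = M1 + M2"
    using assms by (intro eq_matI) (auto simp: M1_def M2_def)
  moreover have "dim_row M = R" using assms by auto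
  ultimately have "mat_rank M = vec_space.rank R (M1 + M2)" unfolding mat_rank_def by simp
  also have "\<dots> \<le> vec_space.rank R M1 + vec_space.rank R M2"
    by (rule vec_space.rank_subadditive[OF M1c M2c])
  also have "vec_space.rank R M1 \<le> 1"
    by (rule vec_space.rank_le_1_product_entries[OF M1c, of u0 w0]) (auto simp: M1_def)
  also have "vec_space.rank R M2 \<le> 1"
    by (rule vec_space.rank_le_1_product_entries[OF M2c, of u1 w1]) (auto simp: M2_def)
  finally show ?thesis by simp
qed

theorem corollary3p4:
  fixes n :: nat and p :: "(nat \<Rightarrow> nat) \<Rightarrow> real"
  assumes "n \<ge> 3"
    and "in_RBM1 n p"
  shows "(\<forall>A. A \<subseteq> {1..n} \<and> A \<noteq> {} \<and> A \<noteq> {1..n} \<longrightarrow> mat_rank (flattening n p A) \<le> 2)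
       \<and> (\<forall>i\<in>{1..n}. \<forall>j\<in>{1..n}. \<forall>k\<in>{1..n}. i \<noteq> j \<and> i \<noteq> k \<and> j \<noteq> k \<longrightarrow>
            sigma n p i j * sigma n p i k * sigma n p j k \<ge> 0)"
proof -
  obtain \<beta> \<gamma> \<omega> where pos: "\<forall>i\<in>{1..n}. \<beta> i > 0 \<and> \<omega> i > 0" "\<gamma> > 0"
    and p: "\<forall>v\<in>binvecs n. p v = rbm_weight n \<beta> \<gamma> \<omega> v / (\<Sum>w\<in>binvecs n. rbm_weight n \<beta> \<gamma> \<omega> w)"
    using assms(2) unfolding in_RBM1_def by blast
  define Z where "Z = (\<Sum>w\<in>binvecs n. rbm_weight n \<beta> \<gamma> \<omega> w)"
  have part1: "mat_rank (flattening n p A) \<le> 2" if A: "A \<subseteq> {1..n}" for A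
  proof -
    define B where "B = {1..n} - A"
    define vf where "vf r c = (\<lambda>i. if i \<in> A then decode_bits A r i else if i \<in> B then decode_bits B c i else 0)" for r c
    have fl: "flattening n p A = mat (2 ^ card A) (2 ^ card B) (\<lambda>(r,c). p (vf r c))"
      unfolding flattening_def B_def vf_def Let_def by simp
    have AB: "{1..n} = A \<union> B" "A \<inter> B = {}" "finite A" "finite B"
      using A unfolding B_def by (auto intro: finite_subset)
    show ?thesis
    proof (rule rank_le_2[of _ _ _ "\<lambda>r. (\<Prod>l\<in>A. \<beta> l ^ decode_bits A r l) / Z"
          "\<lambda>c. \<Prod>l\<in>B. \<beta> l ^ decode_bits B c l"
          "\<lambda>r. \<gamma> * (\<Prod>l\<in>A. (\<beta> l * \<omega> l) ^ decode_bits A r l) / Z"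
          "\<lambda>c. \<Prod>l\<in>B. (\<beta> l * \<omega> l) ^ decode_bits B c l"])
      show "flattening n p A \<in> carrier_mat (2 ^ card A) (2 ^ card B)" unfolding fl by simp
    next
      fix r c :: nat assume rc: "r < 2 ^ card A" "c < 2 ^ card B"
      have vb: "vf r c \<in> binvecs n"
        unfolding binvecs_def vf_def decode_bits_def using AB by auto
      have s1: "(\<Prod>l\<in>{1..n}. f l (vf r c l)) = (\<Prod>l\<in>A. f l (decode_bits A r l)) * (\<Prod>l\<in>B. f l (decode_bits B c l))"
        for f :: "nat \<Rightarrow> nat \<Rightarrow> real"
      proof -
        have "(\<Prod>l\<in>{1..n}. f l (vf r c l)) = (\<Prod>l\<in>A. f l (vf r c l)) * (\<Prod>l\<in>B. f l (vf r c l))"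
          unfolding AB(1) using AB by (intro prod.union_disjoint) auto
        also have "(\<Prod>l\<in>A. f l (vf r c l)) = (\<Prod>l\<in>A. f l (decode_bits A r l))"
          by (rule prod.cong) (auto simp: vf_def)
        also have "(\<Prod>l\<in>B. f l (vf r c l)) = (\<Prod>l\<in>B. f l (decode_bits B c l))"
          using AB by (intro prod.cong) (auto simp: vf_def)
        finally show ?thesis .
      qed
      have "flattening n p A $$ (r, c) = p (vf r c)" unfolding fl using rc by simp
      also have "\<dots> = rbm_weight n \<beta> \<gamma> \<omega> (vf r c) / Z" using p vb Z_def by simp
      also have "\<dots> = ((\<Prod>l\<in>A. \<beta> l ^ decode_bits A r l) * (\<Prod>l\<in>B. \<beta> l ^ decode_bits B c l)
          + \<gamma> * ((\<Prod>l\<in>A. (\<beta> l * \<omega> l) ^ decode_bits A r l) * (\<Prod>l\<in>B. (\<beta> l * \<omega> l) ^ decode_bits B c l))) / Z"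
        unfolding rbm_weight_split s1[of "\<lambda>l x. \<beta> l ^ x"] s1[of "\<lambda>l x. (\<beta> l * \<omega> l) ^ x"] ..
      finally show "flattening n p A $$ (r, c) =
          (\<Prod>l\<in>A. \<beta> l ^ decode_bits A r l) / Z * (\<Prod>l\<in>B. \<beta> l ^ decode_bits B c l) +
          \<gamma> * (\<Prod>l\<in>A. (\<beta> l * \<omega> l) ^ decode_bits A r l) / Z * (\<Prod>l\<in>B. (\<beta> l * \<omega> l) ^ decode_bits B c l)"
        by (simp add: add_divide_distrib)
    qed
  qed
  have part2: "sigma n p i j * sigma n p i k * sigma n p j k \<ge> 0"
    if ijk: "i \<in> {1..n}" "j \<in> {1..n}" "k \<in> {1..n}" "i \<noteq> j" "i \<noteq> k" "j \<noteq> k" for i j k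
  proof -
    obtain K1 where K1: "K1 > 0" "sigma n p i j = K1 * (\<omega> i - 1) * (\<omega> j - 1)"
      using sigma_formula[OF pos p] ijk by blast
    obtain K2 where K2: "K2 > 0" "sigma n p i k = K2 * (\<omega> i - 1) * (\<omega> k - 1)"
      using sigma_formula[OF pos p] ijk by blast
    obtain K3 where K3: "K3 > 0" "sigma n p j k = K3 * (\<omega> j - 1) * (\<omega> k - 1)"
      using sigma_formula[OF pos p] ijk by blast
    have "sigma n p i j * sigma n p i k * sigma n p j k = (K1 * K2 * K3) * ((\<omega> i - 1) * (\<omega> j - 1) * (\<omega> k - 1))^2"
      unfolding K1 K2 K3 by (simp add: power2_eq_square algebra_simps)
    also have "\<dots> \<ge> 0" using K1 K2 K3 by simp
    finally show ?thesis .
  qed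
  show ?thesis using part1 part2 by blast
qed

end
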